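(* Let $\alpha\in(0,1]$, $\gamma\in(0,\infty)$, $s\in\mathbb{R}$, and $\Gamma(x,t)=x-t^\alpha$ for $t\in[0,1]$. Suppose there is a constant $C$ such that for all Schwartz functions $f$ on $\mathbb{R}$, $$\Big\|\sup_{t\in[0,1]}|P_\gamma f(\Gamma(x,t),t)|\Big\|_{L^2([-1,1])}\le C\|f\|_{H^s}.$$ Then $s\ge\max\{\tfrac12-\tfrac\alpha\gamma,0\}$ if $\gamma\in(0,1)$, and $s\ge\max\{\tfrac12-\alpha,0\}$ if $\gamma\in[1,\infty)$.
   Context: For $\gamma>0$ and $t\in[0,1]$, $$P_\gamma f(\Gamma(x,t),t)=\frac1{2\pi}\int_{\mathbb{R}}e^{i(\Gamma(x,t)\xi+t|\xi|^2)}e^{-t^\gamma|\xi|^2}\hat f(\xi)\,d\xi,$$ where $\hat f(\xi)=\int e^{-ix\xi}f(x)\,dx$, and $\|f\|_{H^s}=\|(1+|\xi|^2)^{s/2}\hat f\|_{L^2}$. *)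

theory Defs
  imports "HOL-Analysis.Analysis"
begin

fun higher_vderiv :: "nat \<Rightarrow> (real \<Rightarrow> complex) \<Rightarrow> real \<Rightarrow> complex" where
  "higher_vderiv 0 f = f"
| "higher_vderiv (Suc n) f = (\<lambda>x. vector_derivative (higher_vderiv n f) (at x))"

definition schwartz :: "(real \<Rightarrow> complex) \<Rightarrow> bool" where
  "schwartz f \<longleftrightarrow>
     (\<forall>n x. higher_vderiv n f differentiable (at x)) \<and>
     (\<forall>j k. \<exists>B. \<forall>x. \<bar>x\<bar> ^ k * norm (higher_vderiv j f x) \<le> B)"

definition fourier :: "(real \<Rightarrow> complex) \<Rightarrow> real \<Rightarrow> complex" where
  "fourier f \<xi> = (\<integral>x. exp (- \<i> * complex_of_real (x * \<xi>)) * f x \<partial>lborel)"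

definition P_op :: "real \<Rightarrow> (real \<Rightarrow> complex) \<Rightarrow> real \<Rightarrow> real \<Rightarrow> complex" where
  "P_op \<gamma> f y t = complex_of_real (1 / (2 * pi)) *
     (\<integral>\<xi>. exp (\<i> * complex_of_real (y * \<xi> + t * \<xi>\<^sup>2))
            * complex_of_real (exp (- (t powr \<gamma>) * \<xi>\<^sup>2)) * fourier f \<xi> \<partial>lborel)"

definition Hs_norm :: "real \<Rightarrow> (real \<Rightarrow> complex) \<Rightarrow> real" where
  "Hs_norm s f = sqrt (\<integral>\<xi>. (1 + \<xi>\<^sup>2) powr s * (norm (fourier f \<xi>))\<^sup>2 \<partial>lborel)"

definition Gamma_curve :: "real \<Rightarrow> real \<Rightarrow> real \<Rightarrow> real" where
  "Gamma_curve \<alpha> x t = x - t powr \<alpha>"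

definition max_norm :: "real \<Rightarrow> real \<Rightarrow> (real \<Rightarrow> complex) \<Rightarrow> real" where
  "max_norm \<alpha> \<gamma> f = sqrt (LINT x:{-1..1}|lborel.
      (SUP t\<in>{0..1}. norm (P_op \<gamma> f (Gamma_curve \<alpha> x t) t))\<^sup>2)"

end

theory Submission
  imports Defs "HOL-Probability.Characteristic_Functions" "HOL-Real_Asymp.Real_Asymp"
begin


lemma gauss_std:
  "(\<integral>x. complex_of_real (exp (- x\<^sup>2 / 2)) * exp (\<i> * complex_of_real (t * x)) \<partial>lborel)
     = complex_of_real (sqrt (2 * pi) * exp (- t\<^sup>2 / 2))"
proof -
  have "char std_normal_distribution t = complex_of_real (exp (- (t^2) / 2))"
    by (simp add: char_std_normal_distribution)
  also have "char std_normal_distribution t = (\<integral>x. std_normal_density x *\<^sub>R exp (\<i> * complex_of_real (t * x)) \<partial>lborel)"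
    unfolding char_def by (subst integral_density) auto
  also have "\<dots> = complex_of_real (1 / sqrt (2*pi)) * (\<integral>x. complex_of_real (exp (- x\<^sup>2 / 2)) * exp (\<i> * complex_of_real (t * x)) \<partial>lborel)"
    unfolding std_normal_density_def scaleR_conv_of_real
    by (subst integral_mult_right_zero[symmetric]) (simp add: mult.assoc)
  finally show ?thesis
    by (simp add: field_simps of_real_mult[symmetric] del: of_real_mult)
qed

lemma gauss_integrable:
  assumes "c > 0"
  shows "integrable lborel (\<lambda>u::real. exp (- c * (u - b)\<^sup>2))"
proof -
  define \<sigma> where "\<sigma> = sqrt (1 / (2*c))"
  have s: "\<sigma>\<^sup>2 = 1/(2*c)" "\<sigma> > 0" using assms by (auto simp: \<sigma>_def)
  have "integrable lborel (\<lambda>u. sqrt (2*pi*\<sigma>\<^sup>2) * normal_density b \<sigma> u)" using s(2) by (intro integrable_mult_right integrable_normal_density) auto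
  moreover have "(\<lambda>u. sqrt (2*pi*\<sigma>\<^sup>2) * normal_density b \<sigma> u) = (\<lambda>u::real. exp (- c * (u - b)\<^sup>2))"
    using s assms by (auto simp: normal_density_def field_simps)
  ultimately show ?thesis by simp
qed

lemma gauss_ft:
  assumes c: "c > 0"
  shows "(\<integral>u. exp (\<i> * complex_of_real (a*u)) * complex_of_real (exp (- c * (u - b)\<^sup>2)) \<partial>lborel)
     = exp (\<i> * complex_of_real (a*b)) * complex_of_real (sqrt (pi/c) * exp (- a\<^sup>2 / (4*c)))"
proof -
  define k where "k = 1 / sqrt (2*c)"
  have k: "k > 0" "k\<^sup>2 = 1/(2*c)" using c by (auto simp: k_def power_divide)
  have eq: "exp (\<i> * complex_of_real (a*(b + k*x))) * complex_of_real (exp (- c * ((b + k*x) - b)\<^sup>2))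
      = exp (\<i> * complex_of_real (a*b)) * (complex_of_real (exp (- x\<^sup>2 / 2)) * exp (\<i> * complex_of_real ((a*k) * x)))" for x
  proof -
    have "c * (k*x)\<^sup>2 = x\<^sup>2/2" using k c by (simp add: power_mult_distrib field_simps)
    then have "- c * ((b + k*x) - b)\<^sup>2 = - x\<^sup>2/2" by simp
    moreover have "exp (\<i> * complex_of_real (a*(b + k*x))) = exp (\<i> * complex_of_real (a*b)) * exp (\<i> * complex_of_real ((a*k) * x))"
      by (simp add: exp_add[symmetric] distrib_left algebra_simps)
    ultimately show ?thesis by (simp add: ac_simps)
  qed
  have "(\<integral>u. exp (\<i> * complex_of_real (a*u)) * complex_of_real (exp (- c * (u - b)\<^sup>2)) \<partial>lborel)
     = \<bar>k\<bar> *\<^sub>R (\<integral>x. exp (\<i> * complex_of_real (a*(b + k*x))) * complex_of_real (exp (- c * ((b + k*x) - b)\<^sup>2)) \<partial>lborel)"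
    using k by (intro lborel_integral_real_affine) auto
  also have "\<dots> = k *\<^sub>R (exp (\<i> * complex_of_real (a*b)) * (\<integral>x. complex_of_real (exp (- x\<^sup>2 / 2)) * exp (\<i> * complex_of_real ((a*k) * x)) \<partial>lborel))"
    unfolding eq using k by simp
  also have "\<dots> = k *\<^sub>R (exp (\<i> * complex_of_real (a*b)) * complex_of_real (sqrt (2 * pi) * exp (- (a*k)\<^sup>2 / 2)))"
    by (simp only: gauss_std)
  also have "k * sqrt (2*pi) = sqrt (pi/c)"
    using c by (simp add: k_def real_sqrt_divide real_sqrt_mult field_simps)
  moreover have "(a*k)\<^sup>2 / 2 = a\<^sup>2/(4*c)" using k c by (simp add: power_mult_distrib field_simps)
  ultimately show ?thesis
    by (simp add: scaleR_conv_of_real ac_simps of_real_mult[symmetric] del: of_real_mult)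
qed



lemma pow_gauss_bound:
  fixes x a :: real
  assumes a: "a > 0"
  shows "\<bar>x\<bar>^m * exp (- a * x\<^sup>2) \<le> 1 + (real m / a)^m"
proof (cases "m = 0")
  case True
  have "exp (- a * x\<^sup>2) \<le> 1" using a by simp
  moreover have "\<bar>x\<bar>^m * exp (- a * x\<^sup>2) = exp (- a * x\<^sup>2)"
    using True by simp
  moreover have "1 + (real m / a)^m = 2"
    using True by simp
  ultimately show ?thesis by linarith
next
  case False
  define y where "y = a * x\<^sup>2"
  have y: "y \<ge> 0" using a by (simp add: y_def)
  have "(y / real m)^m \<le> (1 + y / real m)^m"
    using y by (intro power_mono) auto
  also have "\<dots> \<le> exp y"
    using y False by (intro exp_ge_one_plus_x_over_n_power_n) auto
  finally have e: "(y / real m)^m \<le> exp y" .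
  have my: "(real m / a) * (y / real m) = x\<^sup>2" using a False by (simp add: y_def)
  have "(x\<^sup>2)^m = (real m / a)^m * (y / real m)^m"
    unfolding power_mult_distrib[symmetric] my ..
  also have "\<dots> \<le> (real m / a)^m * exp y"
    using e a by (intro mult_left_mono) auto
  finally have x2: "(x\<^sup>2)^m * exp (- y) \<le> (real m / a)^m"
    by (simp add: exp_minus field_simps)
  have xm: "\<bar>x\<bar>^m \<le> 1 + (x\<^sup>2)^m"
  proof (cases "\<bar>x\<bar> \<le> 1")
    case True
    then have "\<bar>x\<bar>^m \<le> 1" by (simp add: power_le_one)
    moreover have "0 \<le> (x\<^sup>2)^m" by simp
    ultimately show ?thesis by linarith
  next
    case False
    then have "\<bar>x\<bar>^m \<le> \<bar>x\<bar>^(2*m)" by (intro power_increasing) auto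
    also have "\<dots> = (x\<^sup>2)^m" by (simp add: power_mult power_even_abs_numeral)
    finally show ?thesis by simp
  qed
  have "\<bar>x\<bar>^m * exp (- y) \<le> (1 + (x\<^sup>2)^m) * exp (- y)"
    using xm by (intro mult_right_mono) auto
  also have "\<dots> = exp (-y) + (x\<^sup>2)^m * exp (- y)" by (simp add: algebra_simps)
  also have "\<dots> \<le> 1 + (real m / a)^m" using x2 y by (intro add_mono) auto
  finally show ?thesis by (simp add: y_def)
qed

definition Qp :: "real \<Rightarrow> real \<Rightarrow> complex poly" where
  "Qp \<sigma> \<omega> = [:0, \<i> * complex_of_real \<omega>, - complex_of_real (1 / (2 * \<sigma>\<^sup>2)):]"

definition hf :: "real \<Rightarrow> real \<Rightarrow> complex poly \<Rightarrow> real \<Rightarrow> complex" where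
  "hf \<sigma> \<omega> P x = poly P (complex_of_real x) * exp (poly (Qp \<sigma> \<omega>) (complex_of_real x))"

definition dstep :: "real \<Rightarrow> real \<Rightarrow> complex poly \<Rightarrow> complex poly" where
  "dstep \<sigma> \<omega> P = pderiv P + P * pderiv (Qp \<sigma> \<omega>)"

lemma Re_Qp: "Re (poly (Qp \<sigma> \<omega>) (complex_of_real x)) = - x\<^sup>2 / (2 * \<sigma>\<^sup>2)"
  by (simp add: Qp_def power2_eq_square)

lemma hf_deriv: "(hf \<sigma> \<omega> P has_vector_derivative hf \<sigma> \<omega> (dstep \<sigma> \<omega> P) x) (at x)"
proof -
  have "((\<lambda>z. poly P z * exp (poly (Qp \<sigma> \<omega>) z)) has_field_derivative
      poly (dstep \<sigma> \<omega> P) z * exp (poly (Qp \<sigma> \<omega>) z)) (at z)" for z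
    by (rule DERIV_cong[OF DERIV_mult[OF poly_DERIV DERIV_chain2[OF DERIV_exp poly_DERIV]]])
       (simp add: dstep_def algebra_simps)
  from has_vector_derivative_real_field[OF this]
  show ?thesis unfolding hf_def by blast
qed

lemma higher_hf: "higher_vderiv n (hf \<sigma> \<omega> P) = hf \<sigma> \<omega> ((dstep \<sigma> \<omega> ^^ n) P)"
proof (induction n)
  case 0 then show ?case by simp
next
  case (Suc n)
  show ?case
    by (rule ext) (simp add: Suc vector_derivative_at[OF hf_deriv])
qed

lemma hf_bound:
  assumes "\<sigma> \<noteq> 0"
  shows "\<exists>B. \<forall>x. \<bar>x\<bar>^k * norm (hf \<sigma> \<omega> P x) \<le> B"
proof -
  define a where "a = 1 / (2 * \<sigma>\<^sup>2)"
  have a: "a > 0" using assms by (simp add: a_def)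
  have "\<bar>x\<bar>^k * norm (hf \<sigma> \<omega> P x) \<le> (\<Sum>i\<le>degree P. norm (coeff P i) * (1 + (real (k+i) / a)^(k+i)))" for x
  proof -
    have ne: "norm (exp (poly (Qp \<sigma> \<omega>) (complex_of_real x))) = exp (- a * x\<^sup>2)"
      by (simp add: Re_Qp a_def)
    have "norm (poly P (complex_of_real x)) \<le> (\<Sum>i\<le>degree P. norm (coeff P i) * \<bar>x\<bar>^i)"
      unfolding poly_altdef
      by (rule order_trans[OF norm_sum]) (simp add: norm_mult norm_power)
    then have "\<bar>x\<bar>^k * norm (hf \<sigma> \<omega> P x) \<le> \<bar>x\<bar>^k * (\<Sum>i\<le>degree P. norm (coeff P i) * \<bar>x\<bar>^i) * exp (- a * x\<^sup>2)"
      unfolding hf_def norm_mult ne mult.assoc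
      by (rule mult_left_mono[OF mult_right_mono]) auto
    also have "\<dots> = (\<Sum>i\<le>degree P. norm (coeff P i) * (\<bar>x\<bar>^(k+i) * exp (- a * x\<^sup>2)))"
      by (simp add: sum_distrib_left sum_distrib_right power_add algebra_simps)
    also have "\<dots> \<le> (\<Sum>i\<le>degree P. norm (coeff P i) * (1 + (real (k+i) / a)^(k+i)))"
      by (intro sum_mono mult_left_mono pow_gauss_bound a) auto
    finally show ?thesis .
  qed
  then show ?thesis by blast
qed

lemma schwartz_hf:
  assumes "\<sigma> \<noteq> 0"
  shows "schwartz (hf \<sigma> \<omega> P)"
  unfolding schwartz_def higher_hf
proof (intro conjI allI)
  fix n x show "hf \<sigma> \<omega> ((dstep \<sigma> \<omega> ^^ n) P) differentiable at x"
    using hf_deriv by (rule differentiableI_vector)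
next
  fix j k show "\<exists>B. \<forall>x. \<bar>x\<bar> ^ k * norm (hf \<sigma> \<omega> ((dstep \<sigma> \<omega> ^^ j) P) x) \<le> B"
    by (rule hf_bound[OF assms])
qed



definition gf :: "real \<Rightarrow> real \<Rightarrow> real \<Rightarrow> complex" where
  "gf \<sigma> \<omega> = hf \<sigma> \<omega> [: complex_of_real (1 / (\<sigma> * sqrt (2*pi))) :]"

lemma schwartz_gf: "\<sigma> \<noteq> 0 \<Longrightarrow> schwartz (gf \<sigma> \<omega>)"
  unfolding gf_def by (rule schwartz_hf)

lemma gf_eq: "gf \<sigma> \<omega> x = complex_of_real (1 / (\<sigma> * sqrt (2*pi))) *
   (exp (\<i> * complex_of_real (\<omega> * x)) * complex_of_real (exp (- (1 / (2*\<sigma>\<^sup>2)) * (x - 0)\<^sup>2)))"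
proof -
  have "poly (Qp \<sigma> \<omega>) (complex_of_real x) = \<i> * complex_of_real (\<omega> * x) + complex_of_real (- (1 / (2*\<sigma>\<^sup>2)) * (x - 0)\<^sup>2)"
    by (simp add: Qp_def power2_eq_square algebra_simps)
  then have e: "exp (poly (Qp \<sigma> \<omega>) (complex_of_real x)) = exp (\<i> * complex_of_real (\<omega> * x)) * complex_of_real (exp (- (1 / (2*\<sigma>\<^sup>2)) * (x - 0)\<^sup>2))"
    by (simp only: exp_add exp_of_real)
  show ?thesis
    unfolding gf_def hf_def e by simp
qed

lemma fourier_gf:
  assumes s: "\<sigma> > 0"
  shows "fourier (gf \<sigma> \<omega>) \<xi> = complex_of_real (exp (- (\<sigma>\<^sup>2 * (\<xi> - \<omega>)\<^sup>2) / 2))"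
proof -
  have c: "1 / (2*\<sigma>\<^sup>2) > 0" using s by simp
  have eq: "exp (- \<i> * complex_of_real (x * \<xi>)) * gf \<sigma> \<omega> x =
     complex_of_real (1 / (\<sigma> * sqrt (2*pi))) *
     (exp (\<i> * complex_of_real ((\<omega> - \<xi>) * x)) * complex_of_real (exp (- (1 / (2*\<sigma>\<^sup>2)) * (x - 0)\<^sup>2)))" for x
  proof -
    have "exp (- \<i> * complex_of_real (x * \<xi>)) * exp (\<i> * complex_of_real (\<omega> * x)) = exp (\<i> * complex_of_real ((\<omega> - \<xi>) * x))"
      by (simp add: exp_add[symmetric] algebra_simps)
    then show ?thesis unfolding gf_eq by (simp add: ac_simps)
  qed
  have "fourier (gf \<sigma> \<omega>) \<xi> = complex_of_real (1 / (\<sigma> * sqrt (2*pi))) *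
     (exp (\<i> * complex_of_real ((\<omega> - \<xi>) * 0)) * complex_of_real (sqrt (pi / (1 / (2*\<sigma>\<^sup>2))) * exp (- (\<omega> - \<xi>)\<^sup>2 / (4 * (1 / (2*\<sigma>\<^sup>2))))))"
    unfolding fourier_def eq integral_mult_right_zero gauss_ft[OF c] ..
  also have "\<dots> = complex_of_real (1 / (\<sigma> * sqrt (2*pi)) * (sqrt (pi / (1 / (2*\<sigma>\<^sup>2))) * exp (- (\<omega> - \<xi>)\<^sup>2 / (4 * (1 / (2*\<sigma>\<^sup>2))))))"
    by simp
  also have "\<dots> = complex_of_real (exp (- (\<sigma>\<^sup>2 * (\<xi> - \<omega>)\<^sup>2) / 2))"
  proof -
    have k1: "1 / (\<sigma> * sqrt (2*pi)) * sqrt (pi / (1 / (2*\<sigma>\<^sup>2))) = 1"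
      using s by (simp add: real_sqrt_mult real_sqrt_divide field_simps)
    have k2: "- (\<omega> - \<xi>)\<^sup>2 / (4 * (1 / (2*\<sigma>\<^sup>2))) = - (\<sigma>\<^sup>2 * (\<xi> - \<omega>)\<^sup>2) / 2"
      using s by (simp add: field_simps power2_commute)
    show ?thesis unfolding mult.assoc[symmetric] k1 k2 by simp
  qed
  finally show ?thesis .
qed

lemma P_op_gf:
  assumes s: "\<sigma> > 0"
  shows "P_op \<gamma> (gf \<sigma> \<omega>) y t = complex_of_real (1 / (2 * pi)) *
     (\<integral>\<xi>. exp (\<i> * complex_of_real (y * \<xi> + t * \<xi>\<^sup>2))
            * complex_of_real (exp (- (t powr \<gamma>) * \<xi>\<^sup>2)) * complex_of_real (exp (- (\<sigma>\<^sup>2 * (\<xi> - \<omega>)\<^sup>2) / 2)) \<partial>lborel)"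
  unfolding P_op_def fourier_gf[OF s] ..

lemma P_op_gf_0:
  assumes s: "\<sigma> > 0" and g: "\<gamma> > 0"
  shows "norm (P_op \<gamma> (gf \<sigma> \<omega>) y 0) = 1 / (2*pi) * (sqrt (2*pi) / \<sigma> * exp (- y\<^sup>2 / (2 * \<sigma>\<^sup>2)))"
proof -
  have c: "\<sigma>\<^sup>2/2 > 0" using s by simp
  have "P_op \<gamma> (gf \<sigma> \<omega>) y 0 = complex_of_real (1 / (2 * pi)) *
     (\<integral>\<xi>. exp (\<i> * complex_of_real (y * \<xi>)) * complex_of_real (exp (- (\<sigma>\<^sup>2/2) * (\<xi> - \<omega>)\<^sup>2)) \<partial>lborel)"
    unfolding P_op_gf[OF s] using g by simp
  also have "\<dots> = complex_of_real (1 / (2 * pi)) * (exp (\<i> * complex_of_real (y*\<omega>)) * complex_of_real (sqrt (pi/(\<sigma>\<^sup>2/2)) * exp (- y\<^sup>2 / (4*(\<sigma>\<^sup>2/2)))))"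
    unfolding gauss_ft[OF c] ..
  finally have "norm (P_op \<gamma> (gf \<sigma> \<omega>) y 0) = 1 / (2 * pi) * (sqrt (pi/(\<sigma>\<^sup>2/2)) * exp (- y\<^sup>2 / (4*(\<sigma>\<^sup>2/2))))"
    by (simp only: norm_mult norm_exp_i_times norm_of_real) (simp add: pi_gt_zero)
  also have "sqrt (pi/(\<sigma>\<^sup>2/2)) = sqrt (2*pi) / \<sigma>"
    using s by (simp add: real_sqrt_divide real_sqrt_mult field_simps)
  also have "- y\<^sup>2 / (4*(\<sigma>\<^sup>2/2)) = - y\<^sup>2 / (2 * \<sigma>\<^sup>2)" by simp
  finally show ?thesis .
qed



lemma cont_param_integral:
  fixes g :: "real \<Rightarrow> real \<Rightarrow> complex"
  assumes w: "integrable lborel w"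
    and bnd: "\<And>y \<xi>. norm (g y \<xi>) \<le> w \<xi>"
    and cont: "\<And>\<xi>. continuous_on UNIV (\<lambda>y. g y \<xi>)"
    and meas: "\<And>y. g y \<in> borel_measurable lborel"
  shows "continuous_on UNIV (\<lambda>y. \<integral>\<xi>. g y \<xi> \<partial>lborel)"
  unfolding continuous_on_sequentially
proof (intro allI ballI impI, elim conjE)
  fix x :: "nat \<Rightarrow> real" and a
  assume lim: "x \<longlonglongrightarrow> a"
  have "(\<lambda>i. \<integral>\<xi>. g (x i) \<xi> \<partial>lborel) \<longlonglongrightarrow> (\<integral>\<xi>. g a \<xi> \<partial>lborel)"
  proof (rule integral_dominated_convergence[OF meas meas w])
    show "AE \<xi> in lborel. (\<lambda>i. g (x i) \<xi>) \<longlonglongrightarrow> g a \<xi>"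
    proof (rule AE_I2)
      fix \<xi>
      show "(\<lambda>i. g (x i) \<xi>) \<longlonglongrightarrow> g a \<xi>"
        using continuous_on_tendsto_compose[OF cont lim] by simp
    qed
    show "AE \<xi> in lborel. norm (g (x i) \<xi>) \<le> w \<xi>" for i
      using bnd by simp
  qed
  then show "((\<lambda>y. \<integral>\<xi>. g y \<xi> \<partial>lborel) \<circ> x) \<longlonglongrightarrow> (\<integral>\<xi>. g a \<xi> \<partial>lborel)"
    by (simp add: o_def)
qed

lemma sup_measurable:
  fixes F :: "real \<Rightarrow> real \<Rightarrow> real"
  assumes cont: "\<And>t. t \<in> T \<Longrightarrow> continuous_on UNIV (\<lambda>x. F x t)"
    and ne: "T \<noteq> {}"
    and bdd: "\<And>x. bdd_above ((F x) ` T)"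
  shows "(\<lambda>x. SUP t\<in>T. F x t) \<in> borel_measurable borel"
  unfolding borel_measurable_iff_greater
proof
  fix c
  have "{w \<in> space borel. c < (SUP t\<in>T. F w t)} = (\<Union>t\<in>T. {x. c < F x t})"
    using less_cSUP_iff[OF ne bdd] by auto
  also have "open \<dots>"
    using cont by (intro open_UN ballI open_Collect_less continuous_on_const) auto
  then have "(\<Union>t\<in>T. {x. c < F x t}) \<in> sets borel" by simp
  finally show "{w \<in> space borel. c < (SUP t\<in>T. F w t)} \<in> sets borel" .
qed

lemma max_norm_lower:
  fixes f :: "real \<Rightarrow> complex" and \<alpha> \<gamma> :: real
  defines "F \<equiv> \<lambda>x t. norm (P_op \<gamma> f (Gamma_curve \<alpha> x t) t)"
  assumes cont: "\<And>t. t \<in> {0..1} \<Longrightarrow> continuous_on UNIV (\<lambda>x. F x t)"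
    and bnd: "\<And>x t. t \<in> {0..1} \<Longrightarrow> F x t \<le> M"
    and ab: "-1 \<le> a" "a \<le> b" "b \<le> 1" and L: "L \<ge> 0"
    and low: "\<And>x. x \<in> {a..b} \<Longrightarrow> \<exists>t\<in>{0..1}. L \<le> F x t"
  shows "L * sqrt (b - a) \<le> max_norm \<alpha> \<gamma> f"
proof -
  define S where "S = (\<lambda>x. SUP t\<in>{0..1::real}. F x t)"
  have bdd: "bdd_above ((F x) ` {0..1})" for x
    using bnd by (intro bdd_aboveI2) auto
  have S0: "0 \<le> S x" for x
    unfolding S_def by (rule cSUP_upper2[OF bdd, of 0]) (auto simp: F_def)
  have SM: "S x \<le> M" for x
    unfolding S_def by (rule cSUP_least) (use bnd in auto)
  have SL: "L \<le> S x" if "x \<in> {a..b}" for x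
    using low[OF that] cSUP_upper2[OF bdd] unfolding S_def by blast
  have Smeas: "S \<in> borel_measurable borel"
    unfolding S_def by (rule sup_measurable[OF cont _ bdd]) auto
  have int1: "integrable lborel (\<lambda>x::real. indicator {-1..1} x * M\<^sup>2 :: real)"
    by (intro integrable_mult_left integrable_real_indicator) (auto intro: borel_closed)
  have int2: "integrable lborel (\<lambda>x::real. indicator {-1..1} x * (S x)\<^sup>2 :: real)"
  proof (rule Bochner_Integration.integrable_bound[OF int1])
    show "(\<lambda>x::real. indicator {-1..1} x * (S x)\<^sup>2) \<in> borel_measurable lborel"
      using Smeas by measurable
    show "AE x in lborel. norm (indicator {-1..1} x * (S x)\<^sup>2 :: real) \<le> norm (indicator {-1..1} x * M\<^sup>2 :: real)"
      using S0 SM by (intro AE_I2) (auto simp: indicator_def intro!: power_mono)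
  qed
  have int3: "integrable lborel (\<lambda>x::real. indicator {a..b} x * L\<^sup>2 :: real)"
    using ab by (intro integrable_mult_left integrable_real_indicator) (auto intro: borel_closed)
  have "L\<^sup>2 * (b - a) = (\<integral>x. indicator {a..b} (x::real) * L\<^sup>2 \<partial>lborel)"
    using ab by simp
  also have "\<dots> \<le> (\<integral>x. indicator {-1..1} (x::real) * (S x)\<^sup>2 \<partial>lborel)"
  proof (rule integral_mono[OF int3 int2])
    fix x
    show "indicator {a..b} x * L\<^sup>2 \<le> indicator {-1..1} x * (S x)\<^sup>2"
      using SL[of x] L ab by (auto simp: indicator_def intro!: power_mono)
  qed
  also have "\<dots> = (LINT x:{-1..1}|lborel. (S x)\<^sup>2)"
    by (simp add: set_lebesgue_integral_def)
  finally have "sqrt (L\<^sup>2 * (b - a)) \<le> max_norm \<alpha> \<gamma> f"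
    unfolding max_norm_def S_def F_def by simp
  then show ?thesis using L ab by (simp add: real_sqrt_mult)
qed



lemma gauss_integral_real:
  assumes "c > 0"
  shows "(\<integral>u. exp (- c * (u - b)\<^sup>2) \<partial>lborel) = sqrt (pi / c)"
proof -
  define \<sigma> where "\<sigma> = sqrt (1 / (2*c))"
  have s: "\<sigma>\<^sup>2 = 1/(2*c)" "\<sigma> > 0" using assms by (auto simp: \<sigma>_def)
  have "(\<lambda>u. sqrt (2*pi*\<sigma>\<^sup>2) * normal_density b \<sigma> u) = (\<lambda>u::real. exp (- c * (u - b)\<^sup>2))"
    using s assms by (auto simp: normal_density_def field_simps)
  then have "(\<integral>u. exp (- c * (u - b)\<^sup>2) \<partial>lborel) = (\<integral>u. sqrt (2*pi*\<sigma>\<^sup>2) * normal_density b \<sigma> u \<partial>lborel)"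
    by simp
  also have "\<dots> = sqrt (2*pi*\<sigma>\<^sup>2)" using s(2) by (simp add: integral_normal_density)
  also have "\<dots> = sqrt (pi / c)" using s by simp
  finally show ?thesis .
qed

definition Ig :: "real \<Rightarrow> real \<Rightarrow> real \<Rightarrow> real \<Rightarrow> real \<Rightarrow> real \<Rightarrow> complex" where
  "Ig \<gamma> \<sigma> \<omega> y t \<xi> = exp (\<i> * complex_of_real (y * \<xi> + t * \<xi>\<^sup>2))
            * complex_of_real (exp (- (t powr \<gamma>) * \<xi>\<^sup>2)) * complex_of_real (exp (- (\<sigma>\<^sup>2 * (\<xi> - \<omega>)\<^sup>2) / 2))"

lemma P_op_Ig: "\<sigma> > 0 \<Longrightarrow> P_op \<gamma> (gf \<sigma> \<omega>) y t = complex_of_real (1 / (2 * pi)) * (\<integral>\<xi>. Ig \<gamma> \<sigma> \<omega> y t \<xi> \<partial>lborel)"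
  unfolding P_op_gf Ig_def by simp

lemma w_integrable: "(\<sigma>::real) > 0 \<Longrightarrow> integrable lborel (\<lambda>\<xi>. exp (- (\<sigma>\<^sup>2 * (\<xi> - \<omega>)\<^sup>2) / 2))"
  using gauss_integrable[of "\<sigma>\<^sup>2/2" \<omega>] by simp

lemma Ig_bound: "t \<ge> 0 \<Longrightarrow> norm (Ig \<gamma> \<sigma> \<omega> y t \<xi>) \<le> exp (- (\<sigma>\<^sup>2 * (\<xi> - \<omega>)\<^sup>2) / 2)"
proof -
  assume t: "t \<ge> 0"
  have "exp (- (t powr \<gamma>) * \<xi>\<^sup>2) \<le> 1" using t by simp
  then show ?thesis
    unfolding Ig_def norm_mult norm_exp_i_times norm_of_real by (simp add: mult_left_le_one_le)
qed

lemma Ig_meas: "Ig \<gamma> \<sigma> \<omega> y t \<in> borel_measurable lborel"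
  unfolding Ig_def by measurable

lemma Ig_integrable: "\<sigma> > 0 \<Longrightarrow> t \<ge> 0 \<Longrightarrow> integrable lborel (Ig \<gamma> \<sigma> \<omega> y t)"
  by (rule Bochner_Integration.integrable_bound[OF w_integrable[of \<sigma> \<omega>] Ig_meas])
     (use Ig_bound in auto)

lemma Ig_cont: "continuous_on UNIV (\<lambda>y. Ig \<gamma> \<sigma> \<omega> y t \<xi>)"
  unfolding Ig_def by (intro continuous_intros)

lemma F_cont:
  assumes "\<sigma> > 0" "t \<ge> 0"
  shows "continuous_on UNIV (\<lambda>x. norm (P_op \<gamma> (gf \<sigma> \<omega>) (Gamma_curve \<alpha> x t) t))"
proof -
  have c: "continuous_on UNIV (\<lambda>y. \<integral>\<xi>. Ig \<gamma> \<sigma> \<omega> y t \<xi> \<partial>lborel)"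
    by (rule cont_param_integral[OF w_integrable[OF assms(1)] Ig_bound[OF assms(2)] Ig_cont Ig_meas])
  have "continuous_on UNIV (\<lambda>x. norm (complex_of_real (1 / (2 * pi)) * (\<integral>\<xi>. Ig \<gamma> \<sigma> \<omega> (x - t powr \<alpha>) t \<xi> \<partial>lborel)))"
    by (intro continuous_intros continuous_on_compose2[OF c]) auto
  then show ?thesis unfolding P_op_Ig[OF assms(1)] Gamma_curve_def .
qed

lemma F_bound:
  assumes "\<sigma> > 0" "t \<ge> 0"
  shows "norm (P_op \<gamma> (gf \<sigma> \<omega>) y t) \<le> 1 / (2*pi) * (\<integral>\<xi>. exp (- (\<sigma>\<^sup>2 * (\<xi> - \<omega>)\<^sup>2) / 2) \<partial>lborel)"
proof -
  have "norm (\<integral>\<xi>. Ig \<gamma> \<sigma> \<omega> y t \<xi> \<partial>lborel) \<le> (\<integral>\<xi>. norm (Ig \<gamma> \<sigma> \<omega> y t \<xi>) \<partial>lborel)"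
    by (rule integral_norm_bound)
  also have "\<dots> \<le> (\<integral>\<xi>. exp (- (\<sigma>\<^sup>2 * (\<xi> - \<omega>)\<^sup>2) / 2) \<partial>lborel)"
    using assms by (intro integral_mono Ig_bound integrable_norm Ig_integrable w_integrable)
  finally have b: "norm (\<integral>\<xi>. Ig \<gamma> \<sigma> \<omega> y t \<xi> \<partial>lborel) \<le> (\<integral>\<xi>. exp (- (\<sigma>\<^sup>2 * (\<xi> - \<omega>)\<^sup>2) / 2) \<partial>lborel)" .
  have n: "norm (complex_of_real (1 / (2 * pi))) = 1 / (2*pi)" by (simp only: norm_of_real) (simp add: pi_gt_zero)
  show ?thesis
    unfolding P_op_Ig[OF assms(1)] norm_mult n using b by (intro mult_left_mono) auto
qed



lemma Hs_gf:
  assumes "\<sigma> > 0"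
  shows "Hs_norm s (gf \<sigma> \<omega>) = sqrt (\<integral>\<xi>. (1 + \<xi>\<^sup>2) powr s * exp (- (\<sigma>\<^sup>2 * (\<xi> - \<omega>)\<^sup>2)) \<partial>lborel)"
proof -
  have "(norm (fourier (gf \<sigma> \<omega>) \<xi>))\<^sup>2 = exp (- (\<sigma>\<^sup>2 * (\<xi> - \<omega>)\<^sup>2))" for \<xi>
    unfolding fourier_gf[OF assms] norm_of_real
    by (simp add: power2_eq_square exp_add[symmetric])
  then show ?thesis unfolding Hs_norm_def by simp
qed

lemma s_nonneg:
  fixes \<alpha> \<gamma> s C :: real
  assumes g: "0 < \<gamma>"
    and hyp: "\<forall>f. schwartz f \<longrightarrow> max_norm \<alpha> \<gamma> f \<le> C * Hs_norm s f"
  shows "s \<ge> 0"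
proof (rule ccontr)
  assume "\<not> s \<ge> 0"
  then have s: "s < 0" by simp
  define L where "L = 1 / (2*pi) * (sqrt (2*pi) / 1 * exp (- 1 / (2 * 1\<^sup>2)))"
  have L: "L > 0" unfolding L_def by simp
  define I where "I = (\<lambda>n::nat. \<integral>\<xi>. (1 + \<xi>\<^sup>2) powr s * exp (- (1\<^sup>2 * (\<xi> - real n)\<^sup>2)) \<partial>lborel)"
  have low: "L * sqrt 2 \<le> C * sqrt (I n)" for n
  proof -
    have "L * sqrt (1 - (-1)) \<le> max_norm \<alpha> \<gamma> (gf 1 (real n))"
    proof (rule max_norm_lower[where M = "1 / (2*pi) * (\<integral>\<xi>. exp (- (1\<^sup>2 * (\<xi> - real n)\<^sup>2) / 2) \<partial>lborel)"])
      show "continuous_on UNIV (\<lambda>x. norm (P_op \<gamma> (gf 1 (real n)) (Gamma_curve \<alpha> x t) t))" if "t \<in> {0..1}" for t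
        using that by (intro F_cont) auto
      show "norm (P_op \<gamma> (gf 1 (real n)) (Gamma_curve \<alpha> x t) t) \<le> 1 / (2*pi) * (\<integral>\<xi>. exp (- (1\<^sup>2 * (\<xi> - real n)\<^sup>2) / 2) \<partial>lborel)"
        if "t \<in> {0..1}" for x t
        using that by (intro F_bound) auto
      show "\<exists>t\<in>{0..1}. L \<le> norm (P_op \<gamma> (gf 1 (real n)) (Gamma_curve \<alpha> x t) t)" if "x \<in> {-1..1}" for x
      proof (intro bexI[of _ 0])
        have "x\<^sup>2 \<le> 1" using that by (auto simp: abs_square_le_1)
        then have "exp (- 1 / (2 * 1\<^sup>2)) \<le> exp (- x\<^sup>2 / (2 * 1\<^sup>2))" by simp
        then show "L \<le> norm (P_op \<gamma> (gf 1 (real n)) (Gamma_curve \<alpha> x 0) 0)"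
          unfolding Gamma_curve_def P_op_gf_0[OF zero_less_one g] L_def
          by (simp add: divide_right_mono)
      qed simp
    qed (use L in auto)
    also have "\<dots> \<le> C * Hs_norm s (gf 1 (real n))"
      using hyp schwartz_gf[of 1] by simp
    also have "\<dots> = C * sqrt (I n)" unfolding Hs_gf[OF zero_less_one] I_def ..
    finally show ?thesis by simp
  qed
  have I0: "I \<longlonglongrightarrow> 0"
  proof -
    have shift: "I n = (\<integral>x. (1 + (real n + x)\<^sup>2) powr s * exp (- 1 * (x - 0)\<^sup>2) \<partial>lborel)" for n
      unfolding I_def by (subst lborel_integral_real_affine[where c=1 and t="real n"]) auto
    have "(\<lambda>n. \<integral>x. (1 + (real n + x)\<^sup>2) powr s * exp (- 1 * (x - 0)\<^sup>2) \<partial>lborel) \<longlonglongrightarrow> (\<integral>x. 0 \<partial>(lborel :: real measure))"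
    proof (rule integral_dominated_convergence[where w = "\<lambda>x. exp (- 1 * (x - 0)\<^sup>2)" and f = "\<lambda>x. 0"
        and s = "\<lambda>n x. (1 + (real n + x)\<^sup>2) powr s * exp (- 1 * (x - 0)\<^sup>2)"])
      show "integrable lborel (\<lambda>x::real. exp (- 1 * (x - 0)\<^sup>2))"
        by (rule gauss_integrable) simp
      show "AE x in lborel. (\<lambda>n. (1 + (real n + x)\<^sup>2) powr s * exp (- 1 * (x - 0)\<^sup>2)) \<longlonglongrightarrow> 0"
      proof (rule AE_I2)
        fix x :: real
        have "filterlim (\<lambda>n. 1 + (real n + x)\<^sup>2) at_top sequentially"
          by real_asymp
        then have "(\<lambda>n. (1 + (real n + x)\<^sup>2) powr s) \<longlonglongrightarrow> 0"
          by (rule tendsto_neg_powr[OF s])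
        then show "(\<lambda>n. (1 + (real n + x)\<^sup>2) powr s * exp (- 1 * (x - 0)\<^sup>2)) \<longlonglongrightarrow> 0"
          by (rule tendsto_mult_left_zero)
      qed
      show "AE x in lborel. norm ((1 + (real n + x)\<^sup>2) powr s * exp (- 1 * (x - 0)\<^sup>2)) \<le> exp (- 1 * (x - 0)\<^sup>2)" for n
      proof (rule AE_I2)
        fix x :: real
        have "(1 + (real n + x)\<^sup>2) powr s \<le> (1 + (real n + x)\<^sup>2) powr 0"
          using s by (intro powr_mono) auto
        moreover have "1 + (real n + x)\<^sup>2 \<noteq> 0"
          by (metis add_pos_nonneg less_numeral_extra(1) zero_le_power2 order_less_irrefl)
        ultimately have "(1 + (real n + x)\<^sup>2) powr s \<le> 1" by simp
        then show "norm ((1 + (real n + x)\<^sup>2) powr s * exp (- 1 * (x - 0)\<^sup>2)) \<le> exp (- 1 * (x - 0)\<^sup>2)"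
          by (simp add: abs_mult mult_left_le_one_le)
      qed
    qed auto
    then show ?thesis unfolding shift by simp
  qed
  then have "(\<lambda>n. C * sqrt (I n)) \<longlonglongrightarrow> C * sqrt 0"
    by (intro tendsto_intros)
  then have "L * sqrt 2 \<le> C * sqrt 0"
    by (rule LIMSEQ_le_const) (use low in auto)
  moreover have "L * sqrt 2 > 0" using L by simp
  ultimately show False by simp
qed



lemma cos_lower: "(u::real) \<ge> 0 \<Longrightarrow> 1 - u \<le> cos u"
proof -
  assume u: "u \<ge> 0"
  have c: "cos u = 1 - 2 * (sin (u/2))\<^sup>2" using cos_double_sin[of "u/2"] by simp
  have "(sin (u/2))\<^sup>2 = \<bar>sin (u/2)\<bar> * \<bar>sin (u/2)\<bar>" by (simp add: power2_eq_square abs_mult_self_eq)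
  also have "\<dots> \<le> \<bar>u/2\<bar> * 1"
    by (intro mult_mono abs_sin_x_le_abs_x abs_sin_le_one) auto
  finally show ?thesis using c u by simp
qed

lemma y_le_exp_half: "(y::real) \<ge> 0 \<Longrightarrow> y \<le> exp (y/2)"
proof -
  assume y: "y \<ge> 0"
  have "(1 + y/4)\<^sup>2 \<le> (exp (y/4))\<^sup>2"
    using y by (intro power_mono) (auto simp: add_increasing)
  also have "\<dots> = exp (y/2)" by (simp add: power2_eq_square exp_add[symmetric])
  finally have "(1 + y/4)\<^sup>2 \<le> exp (y/2)" .
  moreover have "y \<le> (1 + y/4)\<^sup>2"
  proof -
    have "0 \<le> (y/4 - 1)\<^sup>2" by simp
    then show ?thesis by (simp add: power2_eq_square algebra_simps)
  qed
  ultimately show ?thesis by linarith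
qed

lemma Re_Ig: fixes N t \<xi> \<gamma> :: real shows "Re (Ig \<gamma> (1/N) 0 0 t \<xi>) = cos (t * \<xi>\<^sup>2) * exp (- (t powr \<gamma> + 1/(2*N\<^sup>2)) * (\<xi> - 0)\<^sup>2)"
proof -
  have "exp (- (t powr \<gamma>) * \<xi>\<^sup>2) * exp (- ((1/N)\<^sup>2 * (\<xi> - 0)\<^sup>2) / 2) = exp (- (t powr \<gamma> + 1/(2*N\<^sup>2)) * (\<xi> - 0)\<^sup>2)"
    by (simp add: exp_add[symmetric] power_divide algebra_simps)
  then show ?thesis
    unfolding Ig_def by (simp add: Re_exp mult.assoc)
qed

lemma Re_Ig_lower:
  fixes t b \<xi> :: real
  assumes t: "t \<ge> 0" and b: "b > 0"
  shows "cos (t * \<xi>\<^sup>2) * exp (- b * (\<xi> - 0)\<^sup>2) \<ge> exp (- b * (\<xi> - 0)\<^sup>2) - (t / b) * exp (- (b/2) * (\<xi> - 0)\<^sup>2)"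
proof -
  have e: "exp (- b * \<xi>\<^sup>2) > 0" by simp
  have "(1 - t * \<xi>\<^sup>2) * exp (- b * \<xi>\<^sup>2) \<le> cos (t * \<xi>\<^sup>2) * exp (- b * \<xi>\<^sup>2)"
    using cos_lower[of "t * \<xi>\<^sup>2"] t e by (intro mult_right_mono) auto
  moreover have "b * \<xi>\<^sup>2 * exp (- b * \<xi>\<^sup>2) \<le> exp (- (b/2) * \<xi>\<^sup>2)"
  proof -
    have "b * \<xi>\<^sup>2 \<le> exp (b * \<xi>\<^sup>2 / 2)" using b by (intro y_le_exp_half) simp
    then have "b * \<xi>\<^sup>2 * exp (- b * \<xi>\<^sup>2) \<le> exp (b * \<xi>\<^sup>2 / 2) * exp (- b * \<xi>\<^sup>2)"
      by (intro mult_right_mono) auto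
    also have "\<dots> = exp (- (b/2) * \<xi>\<^sup>2)" by (simp add: exp_add[symmetric])
    finally show ?thesis .
  qed
  then have "(t / b) * (b * \<xi>\<^sup>2 * exp (- b * \<xi>\<^sup>2)) \<le> (t / b) * exp (- (b/2) * \<xi>\<^sup>2)"
    using t b by (intro mult_left_mono) auto
  moreover have "(t / b) * (b * \<xi>\<^sup>2 * exp (- b * \<xi>\<^sup>2)) = t * \<xi>\<^sup>2 * exp (- b * \<xi>\<^sup>2)"
    using b by simp
  ultimately show ?thesis by (simp add: algebra_simps)
qed

lemma key_lower:
  fixes N t \<gamma> :: real
  assumes N: "N \<ge> 1" and g: "\<gamma> > 0" and t: "t \<ge> 0" "t \<le> 1/(8*N\<^sup>2)" "t powr \<gamma> \<le> 1/(8*N\<^sup>2)"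
  shows "N / (4 * sqrt pi) \<le> norm (P_op \<gamma> (gf (1/N) 0) 0 t)"
proof -
  define b where "b = t powr \<gamma> + 1/(2*N\<^sup>2)"
  have Npos: "N > 0" using N by simp
  have b0: "b > 0" unfolding b_def using Npos by (simp add: add_nonneg_pos)
  have bge: "b \<ge> 1/(2*N\<^sup>2)" unfolding b_def by simp
  have ble: "b \<le> 1/N\<^sup>2"
  proof -
    have "1/(8*N\<^sup>2) + 1/(2*N\<^sup>2) = (5/8)*(1/N\<^sup>2)" by (simp add: field_simps)
    moreover have "1/N\<^sup>2 \<ge> 0" by simp
    ultimately show ?thesis unfolding b_def using t(3) by linarith
  qed
  have s: "1/N > 0" using Npos by simp
  have int1: "integrable lborel (\<lambda>\<xi>. exp (- b * (\<xi> - 0)\<^sup>2))" by (rule gauss_integrable[OF b0])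
  have int2: "integrable lborel (\<lambda>\<xi>. exp (- (b/2) * (\<xi> - 0)\<^sup>2))" using b0 by (intro gauss_integrable) simp
  have intRe: "integrable lborel (\<lambda>\<xi>. Re (Ig \<gamma> (1/N) 0 0 t \<xi>))"
    using Ig_integrable[OF s t(1)] by (rule integrable_Re)
  have "sqrt (pi / b) - (t / b) * sqrt (pi / (b/2)) =
      (\<integral>\<xi>. exp (- b * (\<xi> - 0)\<^sup>2) - (t / b) * exp (- (b/2) * (\<xi> - 0)\<^sup>2) \<partial>lborel)"
  proof -
    have g1: "(\<integral>\<xi>. exp (- b * (\<xi> - 0)\<^sup>2) \<partial>lborel) = sqrt (pi / b)" by (rule gauss_integral_real[OF b0])
    have g2: "(\<integral>\<xi>. exp (- (b/2) * (\<xi> - 0)\<^sup>2) \<partial>lborel) = sqrt (pi / (b/2))" using b0 by (intro gauss_integral_real) simp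
    show ?thesis
      by (subst Bochner_Integration.integral_diff[OF int1 integrable_mult_right[OF int2]], subst integral_mult_right_zero, simp only: g1 g2)
  qed
  also have "\<dots> \<le> (\<integral>\<xi>. Re (Ig \<gamma> (1/N) 0 0 t \<xi>) \<partial>lborel)"
    using int1 int2 intRe Re_Ig_lower[OF t(1) b0]
    by (intro integral_mono) (auto simp: Re_Ig b_def)
  also have "\<dots> = Re (\<integral>\<xi>. Ig \<gamma> (1/N) 0 0 t \<xi> \<partial>lborel)"
    using Ig_integrable[OF s t(1)] by simp
  also have "\<dots> \<le> norm (\<integral>\<xi>. Ig \<gamma> (1/N) 0 0 t \<xi> \<partial>lborel)"
    by (rule complex_Re_le_cmod)
  finally have I: "sqrt (pi / b) - (t / b) * sqrt (pi / (b/2)) \<le> norm (\<integral>\<xi>. Ig \<gamma> (1/N) 0 0 t \<xi> \<partial>lborel)" .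
  have q: "t / b \<le> 1/4"
  proof -
    have "t \<le> 1/4 * (1/(2*N\<^sup>2))" using t(2) by simp
    also have "\<dots> \<le> 1/4 * b" using bge by simp
    finally show ?thesis using b0 by (simp add: field_simps)
  qed
  have sq2: "sqrt (pi / (b/2)) = sqrt 2 * sqrt (pi / b)"
    by (simp add: real_sqrt_mult[symmetric] field_simps)
  have s2: "sqrt 2 \<le> (2::real)" using real_sqrt_le_mono[of 2 4] by (simp add: real_sqrt_four)
  have "sqrt 2 * (t / b) \<le> 2 * (1/4)"
    using s2 q t(1) b0 by (intro mult_mono) auto
  then have m: "(sqrt 2 * (t / b)) * sqrt (pi / b) \<le> (2 * (1/4)) * sqrt (pi / b)"
    by (rule mult_right_mono) (use b0 in simp_all)
  have "(t / b) * sqrt (pi / (b/2)) = (sqrt 2 * (t / b)) * sqrt (pi / b)"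
    unfolding sq2 by simp
  then have h: "sqrt (pi / b) / 2 \<le> sqrt (pi / b) - (t / b) * sqrt (pi / (b/2))"
    using m by linarith
  have "sqrt pi * N = sqrt (pi * N\<^sup>2)" using Npos by (simp add: real_sqrt_mult)
  also have "\<dots> \<le> sqrt (pi / b)"
  proof -
    have "N\<^sup>2 \<le> 1 / b" using ble b0 Npos by (simp add: field_simps)
    then show ?thesis by (simp add: divide_inverse mult_left_mono)
  qed
  finally have R: "sqrt pi * N \<le> sqrt (pi / b)" .
  have sp: "sqrt pi > 0" by simp
  have pp: "sqrt pi * sqrt pi = pi" by simp
  have "1 / (2*pi) * (sqrt pi * N / 2) = (sqrt pi * N) / (4 * (sqrt pi * sqrt pi))"
    unfolding pp by simp
  also have "\<dots> = N / (4 * sqrt pi)" using sp by (simp add: field_simps)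
  finally have "N / (4 * sqrt pi) = 1 / (2*pi) * (sqrt pi * N / 2)" by simp
  also have "\<dots> \<le> 1 / (2*pi) * norm (\<integral>\<xi>. Ig \<gamma> (1/N) 0 0 t \<xi> \<partial>lborel)"
    using R h I by (intro mult_left_mono) auto
  also have "\<dots> = norm (P_op \<gamma> (gf (1/N) 0) 0 t)"
    unfolding P_op_Ig[OF s] norm_mult norm_of_real by (simp add: pi_gt_zero)
  finally show ?thesis .
qed



lemma one_plus_le_2exp: "(y::real) \<ge> 0 \<Longrightarrow> 1 + y \<le> 2 * exp (y/2)"
proof -
  assume "y \<ge> 0"
  have "1 + y/2 \<le> exp (y/2)" by (rule exp_ge_add_one_self)
  then show ?thesis using \<open>y \<ge> 0\<close> by linarith
qed

lemma Hs_pointwise: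
  fixes N s \<xi> :: real
  assumes N: "N \<ge> 1" and s: "0 \<le> s" "s \<le> 1"
  shows "(1 + \<xi>\<^sup>2) powr s * exp (- ((1/N)\<^sup>2 * (\<xi> - 0)\<^sup>2)) \<le> 2 * N powr (2 * s) * exp (- (1/(2*N\<^sup>2)) * (\<xi> - 0)\<^sup>2)"
proof -
  have Np: "N > 0" using N by simp
  define y where "y = \<xi>\<^sup>2 / N\<^sup>2"
  have y0: "y \<ge> 0" by (simp add: y_def)
  have "1 + \<xi>\<^sup>2 \<le> N\<^sup>2 * (1 + y)"
  proof -
    have "1 \<le> N\<^sup>2" using N by (simp add: one_le_power)
    moreover have "N\<^sup>2 * (1 + y) = N\<^sup>2 + \<xi>\<^sup>2" using Np by (simp add: y_def distrib_left)
    ultimately show ?thesis by linarith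
  qed
  then have "(1 + \<xi>\<^sup>2) powr s \<le> (N\<^sup>2 * (1 + y)) powr s"
    using s by (intro powr_mono2) auto
  also have "\<dots> = (N\<^sup>2) powr s * (1 + y) powr s"
    using y0 by (simp add: powr_mult)
  also have "(N\<^sup>2) powr s = N powr (2 * s)"
    using Np by (simp add: powr_powr[symmetric])
  also have "(1 + y) powr s \<le> (1 + y) powr 1"
    using s y0 by (intro powr_mono) auto
  also have "(1 + y) powr 1 = 1 + y" using y0 by simp
  also have "1 + y \<le> 2 * exp (y/2)" using y0 by (rule one_plus_le_2exp)
  finally have A: "(1 + \<xi>\<^sup>2) powr s \<le> N powr (2 * s) * (2 * exp (y/2))"
    by (simp add: mult_left_mono)
  have "(1 + \<xi>\<^sup>2) powr s * exp (- ((1/N)\<^sup>2 * (\<xi> - 0)\<^sup>2)) \<le> N powr (2 * s) * (2 * exp (y/2)) * exp (- ((1/N)\<^sup>2 * (\<xi> - 0)\<^sup>2))"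
    using A by (intro mult_right_mono) auto
  also have "\<dots> = 2 * N powr (2 * s) * (exp (y/2) * exp (- y))"
    by (simp add: y_def power_divide)
  also have "exp (y/2) * exp (- y) = exp (- (1/(2*N\<^sup>2)) * (\<xi> - 0)\<^sup>2)"
    by (simp add: exp_add[symmetric] y_def)
  finally show ?thesis .
qed

lemma Hs_upper:
  fixes N s :: real
  assumes N: "N \<ge> 1" and s: "0 \<le> s" "s \<le> 1"
  shows "Hs_norm s (gf (1/N) 0) \<le> sqrt (2 * sqrt (2*pi)) * N powr (s + 1/2)"
proof -
  have Np: "N > 0" using N by simp
  have c: "1/(2*N\<^sup>2) > 0" using Np by simp
  have intw: "integrable lborel (\<lambda>\<xi>. 2 * N powr (2 * s) * exp (- (1/(2*N\<^sup>2)) * (\<xi> - 0)\<^sup>2))"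
    by (intro integrable_mult_right gauss_integrable c)
  have intl: "integrable lborel (\<lambda>\<xi>. (1 + \<xi>\<^sup>2) powr s * exp (- ((1/N)\<^sup>2 * (\<xi> - 0)\<^sup>2)))"
  proof (rule Bochner_Integration.integrable_bound[OF intw])
    show "(\<lambda>\<xi>::real. (1 + \<xi>\<^sup>2) powr s * exp (- ((1/N)\<^sup>2 * (\<xi> - 0)\<^sup>2))) \<in> borel_measurable lborel"
      by measurable
    show "AE \<xi> in lborel. norm ((1 + \<xi>\<^sup>2) powr s * exp (- ((1/N)\<^sup>2 * (\<xi> - 0)\<^sup>2))) \<le> norm (2 * N powr (2 * s) * exp (- (1/(2*N\<^sup>2)) * (\<xi> - 0)\<^sup>2))"
      using Hs_pointwise[OF N s] by (intro AE_I2) simp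
  qed
  have "(\<integral>\<xi>. (1 + \<xi>\<^sup>2) powr s * exp (- ((1/N)\<^sup>2 * (\<xi> - 0)\<^sup>2)) \<partial>lborel)
      \<le> (\<integral>\<xi>. 2 * N powr (2 * s) * exp (- (1/(2*N\<^sup>2)) * (\<xi> - 0)\<^sup>2) \<partial>lborel)"
    by (intro integral_mono intl intw Hs_pointwise[OF N s])
  also have "\<dots> = 2 * N powr (2 * s) * sqrt (pi / (1/(2*N\<^sup>2)))"
    by (simp only: integral_mult_right_zero gauss_integral_real[OF c])
  also have "sqrt (pi / (1/(2*N\<^sup>2))) = sqrt (2*pi) * N"
    using Np by (simp add: real_sqrt_mult)
  also have "2 * N powr (2 * s) * (sqrt (2*pi) * N) = (2 * sqrt (2*pi)) * N powr (2 * s + 1)"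
    using Np by (simp add: powr_add)
  finally have J: "(\<integral>\<xi>. (1 + \<xi>\<^sup>2) powr s * exp (- ((1/N)\<^sup>2 * (\<xi> - 0)\<^sup>2)) \<partial>lborel) \<le> (2 * sqrt (2*pi)) * N powr (2 * s + 1)" .
  have "Hs_norm s (gf (1/N) 0) \<le> sqrt ((2 * sqrt (2*pi)) * N powr (2 * s + 1))"
    unfolding Hs_gf[OF divide_pos_pos[OF zero_less_one Np]] using J by simp
  also have "\<dots> = sqrt (2 * sqrt (2*pi)) * N powr (s + 1/2)"
    using Np by (simp add: real_sqrt_mult powr_half_sqrt_powr[symmetric] add_divide_distrib)
  finally show ?thesis .
qed



lemma sqrt_powr: "(x::real) > 0 \<Longrightarrow> sqrt (x powr a) = x powr (a/2)"
  by (simp add: powr_half_sqrt_powr)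

lemma s_lower:
  fixes \<alpha> \<gamma> s C :: real
  assumes a: "0 < \<alpha>" "\<alpha> \<le> 1" and g: "0 < \<gamma>" and s0: "0 \<le> s"
    and hyp: "\<forall>f. schwartz f \<longrightarrow> max_norm \<alpha> \<gamma> f \<le> C * Hs_norm s f"
  shows "s \<ge> 1/2 - \<alpha> / min \<gamma> 1"
proof (rule ccontr)
  define \<mu> where "\<mu> = min \<gamma> 1"
  have mu: "0 < \<mu>" "\<mu> \<le> 1" "\<mu> \<le> \<gamma>" using g by (auto simp: \<mu>_def)
  assume "\<not> s \<ge> 1/2 - \<alpha> / min \<gamma> 1"
  then have e0: "1/2 - \<alpha>/\<mu> - s > 0" unfolding \<mu>_def by simp
  define e where "e = 1/2 - \<alpha>/\<mu> - s"
  have e: "e > 0" using e0 by (simp add: e_def)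
  have "\<alpha>/\<mu> > 0" using a mu by simp
  then have s1: "s \<le> 1" using e0 by linarith
  define K1 where "K1 = 8 powr (- \<alpha> / \<mu> / 2) / (4 * sqrt pi)"
  define K2 where "K2 = sqrt (2 * sqrt (2*pi))"
  define C' where "C' = max C 0"
  have K1: "K1 > 0" by (simp add: K1_def)
  have K2: "K2 > 0" by (simp add: K2_def)
  have main: "K1 * N powr e \<le> C' * K2" if N: "N \<ge> 1" for N :: real
  proof -
    have Np: "N > 0" using N by simp
    define \<delta> where "\<delta> = 8 powr (- \<alpha> / \<mu>) * N powr (- 2 * \<alpha> / \<mu>)"
    have d0: "\<delta> > 0" unfolding \<delta>_def using Np by (intro mult_pos_pos) auto
    have d1: "\<delta> \<le> 1"
    proof -
      have "8 powr (- \<alpha> / \<mu>) \<le> 8 powr 0" using a mu by (intro powr_mono) auto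
      moreover have "N powr (- 2 * \<alpha> / \<mu>) \<le> N powr 0" using a mu N by (intro powr_mono) auto
      ultimately show ?thesis unfolding \<delta>_def
        using Np by (intro mult_le_one) auto
    qed
    have dpow: "\<delta> powr (\<mu>/\<alpha>) = 1 / (8 * N\<^sup>2)"
    proof -
      have "\<delta> powr (\<mu>/\<alpha>) = 8 powr (- \<alpha> / \<mu> * (\<mu>/\<alpha>)) * N powr (- 2 * \<alpha> / \<mu> * (\<mu>/\<alpha>))"
        unfolding \<delta>_def by (simp add: powr_mult powr_powr)
      also have "- \<alpha> / \<mu> * (\<mu>/\<alpha>) = -1" using a mu by simp
      also have "- 2 * \<alpha> / \<mu> * (\<mu>/\<alpha>) = -2" using a mu by simp
      finally show ?thesis using Np by (simp add: powr_minus power2_eq_square field_simps)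
    qed
    define L where "L = N / (4 * sqrt pi)"
    have L0: "L \<ge> 0" using Np by (simp add: L_def)
    have "L * sqrt (\<delta> - 0) \<le> max_norm \<alpha> \<gamma> (gf (1/N) 0)"
    proof (rule max_norm_lower[where M = "1 / (2*pi) * (\<integral>\<xi>. exp (- ((1/N)\<^sup>2 * (\<xi> - 0)\<^sup>2) / 2) \<partial>lborel)"])
      show "continuous_on UNIV (\<lambda>x. norm (P_op \<gamma> (gf (1/N) 0) (Gamma_curve \<alpha> x t) t))" if "t \<in> {0..1}" for t
        using that Np by (intro F_cont) auto
      show "norm (P_op \<gamma> (gf (1/N) 0) (Gamma_curve \<alpha> x t) t) \<le> 1 / (2*pi) * (\<integral>\<xi>. exp (- ((1/N)\<^sup>2 * (\<xi> - 0)\<^sup>2) / 2) \<partial>lborel)"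
        if "t \<in> {0..1}" for x t
        using that Np by (intro F_bound) auto
      show "\<exists>t\<in>{0..1}. L \<le> norm (P_op \<gamma> (gf (1/N) 0) (Gamma_curve \<alpha> x t) t)" if x: "x \<in> {0..\<delta>}" for x
      proof -
        define t where "t = x powr (1/\<alpha>)"
        have x0: "0 \<le> x" "x \<le> 1" using x d1 by auto
        have t0: "0 \<le> t" by (simp add: t_def)
        have t1: "t \<le> 1"
        proof -
          have "x powr (1/\<alpha>) \<le> 1 powr (1/\<alpha>)" using x0 a by (intro powr_mono2) auto
          then show ?thesis by (simp add: t_def)
        qed
        have ta: "t powr \<alpha> = x"
          using a x0 by (simp add: t_def powr_powr)
        have tmu: "t powr \<mu> \<le> 1 / (8 * N\<^sup>2)"
        proof -
          have "t powr \<mu> = x powr (\<mu>/\<alpha>)" by (simp add: t_def powr_powr)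
          also have "\<dots> \<le> \<delta> powr (\<mu>/\<alpha>)" using x a mu by (intro powr_mono2) auto
          finally show ?thesis using dpow by simp
        qed
        have tt: "t \<le> t powr \<mu>"
        proof -
          have "t powr 1 \<le> t powr \<mu>" using t0 t1 mu by (intro powr_mono') auto
          then show ?thesis using t0 by simp
        qed
        have tg: "t powr \<gamma> \<le> t powr \<mu>" using t0 t1 mu by (intro powr_mono') auto
        have "L \<le> norm (P_op \<gamma> (gf (1/N) 0) 0 t)"
          unfolding L_def using N g t0 tt tg tmu by (intro key_lower) auto
        moreover have "Gamma_curve \<alpha> x t = 0" by (simp add: Gamma_curve_def ta)
        ultimately show ?thesis using t0 t1 by (intro bexI[of _ t]) auto
      qed
    qed (use L0 d0 d1 in auto)
    also have "\<dots> \<le> C * Hs_norm s (gf (1/N) 0)"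
      using hyp schwartz_gf[of "1/N" 0] Np by simp
    also have "\<dots> \<le> C' * Hs_norm s (gf (1/N) 0)"
      unfolding C'_def by (intro mult_right_mono) (auto simp: Hs_norm_def)
    also have "\<dots> \<le> C' * (K2 * N powr (s + 1/2))"
      unfolding K2_def C'_def by (intro mult_left_mono Hs_upper N s0 s1) auto
    finally have A: "L * sqrt \<delta> \<le> C' * (K2 * N powr (s + 1/2))" by simp
    have "sqrt \<delta> = 8 powr (- \<alpha> / \<mu> / 2) * N powr (- \<alpha> / \<mu>)"
      unfolding \<delta>_def using Np by (simp add: real_sqrt_mult sqrt_powr)
    moreover have "N * N powr (- \<alpha> / \<mu>) = N powr (1 - \<alpha> / \<mu>)"
    proof -
      have "N powr (1 - \<alpha> / \<mu>) = N powr 1 * N powr (- \<alpha> / \<mu>)"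
        unfolding powr_add[symmetric] by simp
      then show ?thesis using Np by (simp add: powr_one)
    qed
    ultimately have "L * sqrt \<delta> = K1 * N powr (1 - \<alpha> / \<mu>)"
      unfolding L_def K1_def by (simp add: ac_simps)
    also have "N powr (1 - \<alpha> / \<mu>) = N powr e * N powr (s + 1/2)"
      unfolding e_def powr_add[symmetric] by simp
    finally have "K1 * N powr e * N powr (s + 1/2) \<le> C' * K2 * N powr (s + 1/2)"
      using A by (simp add: mult.assoc)
    then show ?thesis using Np by simp
  qed
  define N where "N = max 1 ((C' * K2 / K1 + 1) powr (1/e))"
  have C'0: "C' \<ge> 0" by (simp add: C'_def)
  have q0: "C' * K2 / K1 + 1 > 0" using C'0 K1 K2 by (simp add: add_nonneg_pos)
  have "C' * K2 / K1 + 1 = ((C' * K2 / K1 + 1) powr (1/e)) powr e"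
    using e q0 by (simp add: powr_powr)
  also have "\<dots> \<le> N powr e" unfolding N_def using e by (intro powr_mono2) auto
  finally have "K1 * (C' * K2 / K1 + 1) \<le> K1 * N powr e" using K1 by simp
  also have "\<dots> \<le> C' * K2" by (rule main) (simp add: N_def)
  finally have X: "K1 * (C' * K2 / K1 + 1) \<le> C' * K2" .
  have "K1 * (C' * K2 / K1 + 1) = C' * K2 + K1" using K1 by (simp add: field_simps)
  then show False using X K1 by linarith
qed

theorem theorem3p1:
  fixes \<alpha> \<gamma> s C :: real
  assumes "0 < \<alpha>" and "\<alpha> \<le> 1" and "0 < \<gamma>"
    and "\<forall>f. schwartz f \<longrightarrow> max_norm \<alpha> \<gamma> f \<le> C * Hs_norm s f"
  shows "(\<gamma> < 1 \<longrightarrow> s \<ge> max (1/2 - \<alpha> / \<gamma>) 0) \<and>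
         (1 \<le> \<gamma> \<longrightarrow> s \<ge> max (1/2 - \<alpha>) 0)"
proof -
  have s0: "s \<ge> 0" by (rule s_nonneg[OF assms(3,4)])
  have sl: "s \<ge> 1/2 - \<alpha> / min \<gamma> 1" by (rule s_lower[OF assms(1,2,3) s0 assms(4)])
  show ?thesis using s0 sl by (auto simp: min_def split: if_splits)
qed

end
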